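(* The weight matrices $W_H$, $W_L$ and $W_J$ are irreducible.
   Context: A weight matrix $W$ of size $N$ is reducible if there is a constant invertible matrix $M$ such that $MW(x)M^*$ is block diagonal with at least two blocks of smaller size for all $x$; otherwise irreducible. Classical scalar weights: Hermite $w_b(x)=e^{-x^2+2bx}$ on $\mathbb R$; Laguerre $w_\alpha(x)=e^{-x}x^\alpha$ on $(0,\infty)$, $\alpha>-1$; Jacobi $w_{\alpha,\beta}(x)=(1-x)^\alpha(1+x)^\beta$ on $(-1,1)$, $\alpha,\beta>-1$. Let $N\ge2$, $A=\sum_{j=1}^{\lfloor N/2\rfloor}a_{2j-1}E_{2j-1,2j}+\sum_{j=1}^{\lfloor (N-1)/2\rfloor}a_{2j}E_{2j+1,2j}$ ($E_{s,t}$ matrix units, all $a_j\in\mathbb R\setminus\{0\}$), $T(x)=I+Ax$. $W_H=T\,\mathrm{diag}(w_{b_1},\dots,w_{b_N})\,T^*$ with $b_i$ pairwise distinct reals; $W_L=T\,\mathrm{diag}(w_{\alpha_1},\dots,w_{\alpha_N})\,T^*$ with $\alpha_i-\alpha_j\notin\mathbb Z$ for $i\ne j$; $W_J=T\,\mathrm{diag}(w_{\alpha_1,\beta_1},\dots,w_{\alpha_N,\beta_N})\,T^*$ with, for $i\ne j$, $\alpha_i-\alpha_j\notin\mathbb Z$ or $\beta_i-\beta_j\notin\mathbb Z$, and $\alpha_1+\beta_1=\alpha_j+\beta_j+1+(-1)^j$ for all $j$. *)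

theory Defs
  imports "Jordan_Normal_Form.Schur_Decomposition"
begin

text \<open>Matrices are N x N Jordan_Normal_Form matrices, indices 0..N-1
  (index i corresponds to index i+1 of the paper).\<close>

definition same_block :: "nat list \<Rightarrow> nat \<Rightarrow> nat \<Rightarrow> bool" where
  "same_block ns i j \<longleftrightarrow> (\<exists>r < length ns.
      sum_list (take r ns) \<le> i \<and> i < sum_list (take (Suc r) ns) \<and>
      sum_list (take r ns) \<le> j \<and> j < sum_list (take (Suc r) ns))"

definition block_diagonal :: "nat list \<Rightarrow> complex mat \<Rightarrow> bool" where
  "block_diagonal ns B \<longleftrightarrow>
     (\<forall>i < dim_row B. \<forall>j < dim_col B. \<not> same_block ns i j \<longrightarrow> B $$ (i, j) = 0)"

definition reducible_weight :: "nat \<Rightarrow> real set \<Rightarrow> (real \<Rightarrow> real mat) \<Rightarrow> bool" where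
  "reducible_weight N S W \<longleftrightarrow>
     (\<exists>M ns. M \<in> carrier_mat N N \<and> invertible_mat M \<and>
        length ns \<ge> 2 \<and> (\<forall>k \<in> set ns. 0 < k) \<and> sum_list ns = N \<and>
        (\<forall>x \<in> S. block_diagonal ns (M * map_mat complex_of_real (W x) * mat_adjoint M)))"

definition irreducible_weight :: "nat \<Rightarrow> real set \<Rightarrow> (real \<Rightarrow> real mat) \<Rightarrow> bool" where
  "irreducible_weight N S W \<longleftrightarrow> \<not> reducible_weight N S W"

text \<open>The matrix A (0-indexed): a_k (paper index k = 1..N-1) sits at paper position (k,k+1)
  for k odd and at (k+1,k) for k even.\<close>
definition A_mat :: "nat \<Rightarrow> (nat \<Rightarrow> real) \<Rightarrow> real mat" where
  "A_mat N a = mat N N (\<lambda>(i, j).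
     if j = i + 1 \<and> even i then a (i + 1)
     else if i = j + 1 \<and> odd j then a i
     else 0)"

definition T_mat :: "nat \<Rightarrow> (nat \<Rightarrow> real) \<Rightarrow> real \<Rightarrow> real mat" where
  "T_mat N a x = 1\<^sub>m N + x \<cdot>\<^sub>m A_mat N a"

definition weight_mat :: "nat \<Rightarrow> (nat \<Rightarrow> real) \<Rightarrow> (nat \<Rightarrow> real \<Rightarrow> real) \<Rightarrow> real \<Rightarrow> real mat" where
  "weight_mat N a w x =
     T_mat N a x * mat N N (\<lambda>(i, j). if i = j then w i x else 0) * transpose_mat (T_mat N a x)"

definition hermite_w :: "real \<Rightarrow> real \<Rightarrow> real" where
  "hermite_w b x = exp (- (x * x) + 2 * b * x)"

definition laguerre_w :: "real \<Rightarrow> real \<Rightarrow> real" where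
  "laguerre_w \<alpha> x = exp (- x) * x powr \<alpha>"

definition jacobi_w :: "real \<Rightarrow> real \<Rightarrow> real \<Rightarrow> real" where
  "jacobi_w \<alpha> \<beta> x = (1 - x) powr \<alpha> * (1 + x) powr \<beta>"

end

theory Submission
  imports Defs
begin

lemma adj_dims[simp]: "dim_row (mat_adjoint A) = dim_col A" "dim_col (mat_adjoint A) = dim_row A"
  unfolding mat_adjoint_def by auto

lemma adj_carrier: "A \<in> carrier_mat n m \<Longrightarrow> mat_adjoint A \<in> carrier_mat m n"
  unfolding carrier_mat_def by simp

lemma adj_index[simp]: "i < dim_col A \<Longrightarrow> j < dim_row A \<Longrightarrow>
   mat_adjoint (A::complex mat) $$ (i,j) = cnj (A $$ (j,i))"
  unfolding mat_adjoint_def by (simp add: mat_of_rows_index)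

lemma mult_index_sum: "A \<in> carrier_mat n m \<Longrightarrow> B \<in> carrier_mat m p \<Longrightarrow> i < n \<Longrightarrow> j < p \<Longrightarrow>
  (A * B) $$ (i,j) = (\<Sum>k<m. A $$ (i,k) * B $$ (k,j))"
  by (simp add: scalar_prod_def lessThan_atLeast0)

lemma adj_mult:
  fixes A B :: "complex mat"
  assumes A: "A \<in> carrier_mat n m" and B: "B \<in> carrier_mat m p"
  shows "mat_adjoint (A * B) = mat_adjoint B * mat_adjoint A"
proof (rule eq_matI)
  have Ah: "mat_adjoint A \<in> carrier_mat m n" and Bh: "mat_adjoint B \<in> carrier_mat p m"
    using A B adj_carrier by blast+
  fix i j assume i: "i < dim_row (mat_adjoint B * mat_adjoint A)" and j: "j < dim_col (mat_adjoint B * mat_adjoint A)"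
  then have i': "i < p" and j': "j < n" using Ah Bh by auto
  have "mat_adjoint (A * B) $$ (i, j) = cnj ((A * B) $$ (j,i))"
    using A B i' j' by simp
  also have "\<dots> = cnj (\<Sum>k<m. A $$ (j,k) * B $$ (k,i))"
    using mult_index_sum[OF A B j' i'] by simp
  also have "\<dots> = (\<Sum>k<m. cnj (B $$ (k,i)) * cnj (A $$ (j,k)))"
    by (simp add: mult.commute)
  also have "\<dots> = (\<Sum>k<m. mat_adjoint B $$ (i,k) * mat_adjoint A $$ (k,j))"
    using A B i' j' by simp
  also have "\<dots> = (mat_adjoint B * mat_adjoint A) $$ (i,j)"
    using mult_index_sum[OF Bh Ah i' j'] by simp
  finally show "mat_adjoint (A * B) $$ (i, j) = (mat_adjoint B * mat_adjoint A) $$ (i,j)" .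
next
  show "dim_row (mat_adjoint (A * B)) = dim_row (mat_adjoint B * mat_adjoint A)" by simp
  show "dim_col (mat_adjoint (A * B)) = dim_col (mat_adjoint B * mat_adjoint A)" by simp
qed

lemma adj_one[simp]: "mat_adjoint (1\<^sub>m n :: complex mat) = 1\<^sub>m n"
  by (rule eq_matI) simp_all

lemma same_block_first:
  assumes "same_block (n0 # rest) i j" shows "i < n0 \<longleftrightarrow> j < n0"
proof -
  obtain r where r: "r < length (n0 # rest)"
    and b: "sum_list (take r (n0 # rest)) \<le> i" "i < sum_list (take (Suc r) (n0 # rest))"
      "sum_list (take r (n0 # rest)) \<le> j" "j < sum_list (take (Suc r) (n0 # rest))"
    using assms unfolding same_block_def by blast
  show ?thesis
  proof (cases r)
    case 0
    then show ?thesis using b by simp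
  next
    case (Suc r')
    then show ?thesis using b by simp
  qed
qed

lemma sum_if_delta: assumes "(i::nat) < N" shows "(\<Sum>k<N. (if i = k \<and> c then 1 else 0) * (f k :: 'a :: semiring_1)) = (if c then f i else 0)"
proof -
  have "(\<Sum>k<N. (if i = k \<and> c then 1 else 0) * f k) = (\<Sum>k<N. if k = i then (if c then f k else 0) else 0)"
    by (rule sum.cong) auto
  also have "\<dots> = (if c then (\<Sum>k<N. if k = i then f k else 0) else 0)"
    by (cases c) (auto intro!: sum.cong)
  also have "\<dots> = (if c then f i else 0)"
    using assms by (simp add: sum.delta)
  finally show ?thesis .
qed

lemma sum_if_delta2: assumes "(i::nat) < N" shows "(\<Sum>k<N. (f k :: 'a :: semiring_1) * (if k = i \<and> c then 1 else 0)) = (if c then f i else 0)"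
proof -
  have "(\<Sum>k<N. f k * (if k = i \<and> c then 1 else 0)) = (\<Sum>k<N. if k = i then (if c then f k else 0) else 0)"
    by (rule sum.cong) auto
  also have "\<dots> = (if c then (\<Sum>k<N. if k = i then f k else 0) else 0)"
    by (cases c) (auto intro!: sum.cong)
  also have "\<dots> = (if c then f i else 0)"
    using assms by (simp add: sum.delta)
  finally show ?thesis .
qed

lemma blockdiag_commute:
  fixes B :: "complex mat"
  assumes B: "B \<in> carrier_mat N N" and bd: "block_diagonal (n0 # rest) B"
    and P: "P = mat N N (\<lambda>(i,j). if i = j \<and> i < n0 then 1 else 0)"
  shows "P * B = B * P"
proof (rule eq_matI)
  have PC: "P \<in> carrier_mat N N" using P by simp
  fix i j assume i: "i < dim_row (B * P)" and j: "j < dim_col (B * P)"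
  then have i': "i < N" and j': "j < N" using B PC by simp_all
  have "(P * B) $$ (i,j) = (\<Sum>k<N. P $$ (i,k) * B $$ (k,j))"
    using mult_index_sum[OF PC B i' j'] .
  also have "\<dots> = (\<Sum>k<N. (if i = k \<and> i < n0 then 1 else 0) * B $$ (k,j))"
    using P i' j' by (intro sum.cong) auto
  also have "\<dots> = (if i < n0 then B $$ (i,j) else 0)"
    using sum_if_delta[OF i'] .
  also have "\<dots> = (if j < n0 then B $$ (i,j) else 0)"
  proof (cases "same_block (n0 # rest) i j")
    case True
    then show ?thesis using same_block_first by metis
  next
    case False
    have "dim_row B = N" "dim_col B = N" using B by simp_all
    then have "B $$ (i,j) = 0" using bd i' j' False unfolding block_diagonal_def by simp
    then show ?thesis by simp
  qed
  also have "\<dots> = (\<Sum>k<N. B $$ (i,k) * (if k = j \<and> j < n0 then 1 else 0))"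
    using sum_if_delta2[OF j', of "\<lambda>k. B $$ (i,k)" "j < n0"] by (rule sym)
  also have "\<dots> = (\<Sum>k<N. B $$ (i,k) * P $$ (k,j))"
    using P j' by (intro sum.cong) auto
  also have "\<dots> = (B * P) $$ (i,j)"
    using mult_index_sum[OF B PC i' j'] by simp
  finally show "(P * B) $$ (i,j) = (B * P) $$ (i,j)" .
next
  show "dim_row (P * B) = dim_row (B * P)" using B P by simp
  show "dim_col (P * B) = dim_col (B * P)" using B P by simp
qed

lemma reduce:
  fixes W :: "real \<Rightarrow> real mat"
  assumes red: "reducible_weight N S W" and WC: "\<And>x. W x \<in> carrier_mat N N"
  shows "\<exists>Q \<in> carrier_mat N N. (\<forall>x\<in>S. Q * map_mat complex_of_real (W x)
            = map_mat complex_of_real (W x) * mat_adjoint Q) \<and> (\<forall>d. Q \<noteq> d \<cdot>\<^sub>m 1\<^sub>m N)"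
proof -
  obtain M ns where M: "M \<in> carrier_mat N N" and inv: "invertible_mat M" and len: "length ns \<ge> 2"
    and pos: "\<forall>k \<in> set ns. 0 < k" and sm: "sum_list ns = N"
    and bd: "\<forall>x \<in> S. block_diagonal ns (M * map_mat complex_of_real (W x) * mat_adjoint M)"
    using red unfolding reducible_weight_def by blast
  obtain M' where MM': "M * M' = 1\<^sub>m N" and M'M: "M' * M = 1\<^sub>m (dim_row M')"
    using inv M unfolding invertible_mat_def inverts_mat_def by auto
  have rM': "dim_row M' = N"
    using arg_cong[OF M'M, of dim_col] M by simp
  have cM': "dim_col M' = N"
    using arg_cong[OF MM', of dim_col] M by simp
  have M'C: "M' \<in> carrier_mat N N" using rM' cM' by (rule carrier_matI)
  have M'M2: "M' * M = 1\<^sub>m N" using M'M rM' by simp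
  obtain n0 n1 rest where ns: "ns = n0 # n1 # rest"
    using len by (metis Suc_le_length_iff numeral_2_eq_2)
  have n0: "0 < n0" and n1: "0 < n1" using pos ns by auto
  have n0N: "n0 < N" using sm ns n1 by simp
  define P :: "complex mat" where "P = mat N N (\<lambda>(i,j). if i = j \<and> i < n0 then 1 else 0)"
  have PC: "P \<in> carrier_mat N N" unfolding P_def by simp
  have Padj: "mat_adjoint P = P"
    by (rule eq_matI) (simp_all add: P_def)
  define Q where "Q = M' * P * M"
  have QC: "Q \<in> carrier_mat N N" unfolding Q_def using M M'C PC by simp
  have MhC: "mat_adjoint M \<in> carrier_mat N N" and M'hC: "mat_adjoint M' \<in> carrier_mat N N"
    using adj_carrier M M'C by blast+
  have Qadj: "mat_adjoint Q = mat_adjoint M * (P * mat_adjoint M')"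
    unfolding Q_def using adj_mult[of "M' * P" N N M N] adj_mult[of M' N N P N] M M'C PC Padj
    by simp
  have hinv: "mat_adjoint M * mat_adjoint M' = 1\<^sub>m N"
    using adj_mult[OF M'C M] M'M2 by simp
  have eq: "Q * map_mat complex_of_real (W x) = map_mat complex_of_real (W x) * mat_adjoint Q"
    if x: "x \<in> S" for x
  proof -
    define Wc where "Wc = map_mat complex_of_real (W x)"
    have WcC: "Wc \<in> carrier_mat N N" unfolding Wc_def using WC by simp
    define B where "B = M * Wc * mat_adjoint M"
    have BC: "B \<in> carrier_mat N N" unfolding B_def using M WcC MhC by simp
    have PB: "P * B = B * P"
      using blockdiag_commute[OF BC _ P_def] bd x ns unfolding B_def Wc_def by blast
    have "Q * Wc = M' * (P * (M * Wc)) * (mat_adjoint M * mat_adjoint M')"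
      unfolding Q_def hinv using M M'C PC WcC by (simp add: assoc_mult_mat[of _ N N _ N _ N])
    also have "\<dots> = M' * ((P * B) * mat_adjoint M')"
      unfolding B_def using M M'C PC WcC MhC M'hC by (simp add: assoc_mult_mat[of _ N N _ N _ N])
    also have "\<dots> = M' * ((B * P) * mat_adjoint M')" using PB by simp
    also have "\<dots> = (M' * M) * Wc * (mat_adjoint M * (P * mat_adjoint M'))"
      unfolding B_def using M M'C PC WcC MhC M'hC by (simp add: assoc_mult_mat[of _ N N _ N _ N])
    also have "\<dots> = Wc * mat_adjoint Q"
      unfolding Qadj M'M2 using WcC by simp
    finally show ?thesis unfolding Wc_def .
  qed
  have notsc: "Q \<noteq> d \<cdot>\<^sub>m 1\<^sub>m N" for d
  proof
    assume Qd: "Q = d \<cdot>\<^sub>m 1\<^sub>m N"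
    have "P = (M * M') * P * (M * M')" using PC by (simp add: MM')
    also have "\<dots> = M * Q * M'" unfolding Q_def using M M'C PC by (simp add: assoc_mult_mat[of _ N N _ N _ N])
    also have "\<dots> = d \<cdot>\<^sub>m 1\<^sub>m N" unfolding Qd
      using M M'C mult_smult_distrib[OF M one_carrier_mat, of d] mult_smult_assoc_mat[OF M M'C, of d]
      by (simp add: MM')
    finally have Pd: "P = d \<cdot>\<^sub>m 1\<^sub>m N" .
    have "P $$ (0,0) = 1" using n0 n0N by (simp add: P_def)
    moreover have "P $$ (0,0) = d" using n0N by (simp add: Pd)
    moreover have "P $$ (N-1,N-1) = 0" using n0N by (simp add: P_def)
    moreover have "P $$ (N-1,N-1) = d" using n0N by (simp add: Pd)
    ultimately show False by simp
  qed
  show ?thesis using QC eq notsc by blast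
qed

lemma A_dims[simp]: "dim_row (A_mat N a) = N" "dim_col (A_mat N a) = N"
  unfolding A_mat_def by simp_all

lemma A_carrier[simp]: "A_mat N a \<in> carrier_mat N N"
  unfolding A_mat_def by simp

lemma A_index: "i < N \<Longrightarrow> j < N \<Longrightarrow> A_mat N a $$ (i,j) =
  (if j = i + 1 \<and> even i then a (i + 1) else if i = j + 1 \<and> odd j then a i else 0)"
  unfolding A_mat_def by simp

lemma A_diag: "i < N \<Longrightarrow> A_mat N a $$ (i,i) = 0"
  by (simp add: A_index)

lemma T_dims[simp]: "dim_row (T_mat N a x) = N" "dim_col (T_mat N a x) = N"
  unfolding T_mat_def by simp_all

lemma T_carrier[simp]: "T_mat N a x \<in> carrier_mat N N"
  by (rule carrier_matI) simp_all

lemma T_index: "i < N \<Longrightarrow> j < N \<Longrightarrow> T_mat N a x $$ (i,j) = (if i = j then 1 else 0) + x * A_mat N a $$ (i,j)"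
  unfolding T_mat_def using A_carrier[of N a] by simp

lemma weight_carrier: "weight_mat N a w x \<in> carrier_mat N N"
  unfolding weight_mat_def by (rule carrier_matI) simp_all

lemma weight_index:
  assumes l: "l < N" and j: "j < N"
  shows "weight_mat N a w x $$ (l,j) = (\<Sum>k<N. T_mat N a x $$ (l,k) * w k x * T_mat N a x $$ (j,k))"
proof -
  define T where "T = T_mat N a x"
  define D where "D = mat N N (\<lambda>(i, j). if i = j then w i x else 0)"
  have TC: "T \<in> carrier_mat N N" and DC: "D \<in> carrier_mat N N"
    and TtC: "transpose_mat T \<in> carrier_mat N N" unfolding T_def D_def by simp_all
  have TD: "(T * D) $$ (l,k) = T $$ (l,k) * w k x" if k: "k < N" for k
  proof -
    have "(T * D) $$ (l,k) = (\<Sum>m<N. T $$ (l,m) * D $$ (m,k))"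
      using mult_index_sum[OF TC DC l k] .
    also have "\<dots> = (\<Sum>m<N. if m = k then T $$ (l,m) * w m x else 0)"
      unfolding D_def using k by (intro sum.cong) auto
    also have "\<dots> = T $$ (l,k) * w k x" using k by (simp add: sum.delta)
    finally show ?thesis .
  qed
  have TDC: "T * D \<in> carrier_mat N N" using TC DC by simp
  have "weight_mat N a w x $$ (l,j) = (T * D * transpose_mat T) $$ (l,j)"
    unfolding weight_mat_def T_def D_def ..
  also have "\<dots> = (\<Sum>k<N. (T * D) $$ (l,k) * transpose_mat T $$ (k,j))"
    using mult_index_sum[OF TDC TtC l j] .
  also have "\<dots> = (\<Sum>k<N. T $$ (l,k) * w k x * T $$ (j,k))"
    using TD j TC by (intro sum.cong) auto
  finally show ?thesis unfolding T_def .
qed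

lemma core:
  fixes Q :: "complex mat" and w :: "nat \<Rightarrow> real \<Rightarrow> real"
  assumes QC: "Q \<in> carrier_mat N N"
    and anz: "\<forall>k\<in>{1..N-1}. a k \<noteq> 0"
    and indep: "\<And>p. \<forall>x\<in>S. (\<Sum>k<N. w k x * poly (p k) x) = 0 \<Longrightarrow> \<forall>k<N. p k = 0"
    and eq: "\<forall>x\<in>S. Q * map_mat complex_of_real (weight_mat N a w x)
               = map_mat complex_of_real (weight_mat N a w x) * mat_adjoint Q"
  shows "\<exists>d. Q = d \<cdot>\<^sub>m 1\<^sub>m N"
proof -
  define Tx where "Tx x l k = T_mat N a x $$ (l,k)" for x l k
  define Ax where "Ax l k = complex_of_real (A_mat N a $$ (l,k))" for l k
  define dl where "dl l k = (if l = k then 1 else 0 :: complex)" for l k :: nat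
  define R where "R i k = (\<Sum>l<N. Q $$ (i,l) * Ax l k)" for i k
  define U where "U x i k = (\<Sum>l<N. Q $$ (i,l) * complex_of_real (Tx x l k))" for x i k
  define Wc where "Wc x = map_mat complex_of_real (weight_mat N a w x)" for x
  have WcC: "Wc x \<in> carrier_mat N N" for x
    unfolding Wc_def using weight_carrier[of N a w x] by simp
  have QhC: "mat_adjoint Q \<in> carrier_mat N N" using adj_carrier[OF QC] .
  have QD: "dim_row Q = N" "dim_col Q = N" using QC by simp_all
  have Tx_eq: "complex_of_real (Tx x l k) = dl l k + complex_of_real x * Ax l k"
    if "l < N" "k < N" for x l k
    unfolding Tx_def dl_def Ax_def using that by (simp add: T_index)
  have U_eq: "U x i k = Q $$ (i,k) + complex_of_real x * R i k" if k: "k < N" for x i k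
  proof -
    have "U x i k = (\<Sum>l<N. Q $$ (i,l) * dl l k + complex_of_real x * (Q $$ (i,l) * Ax l k))"
      unfolding U_def by (intro sum.cong) (simp_all add: Tx_eq k algebra_simps)
    also have "\<dots> = (\<Sum>l<N. Q $$ (i,l) * dl l k) + complex_of_real x * R i k"
      unfolding R_def by (simp add: sum.distrib sum_distrib_left)
    also have "(\<Sum>l<N. Q $$ (i,l) * dl l k) = Q $$ (i,k)"
    proof -
      have "(\<Sum>l<N. Q $$ (i,l) * dl l k) = (\<Sum>l<N. if l = k then Q $$ (i,l) else 0)"
        unfolding dl_def by (intro sum.cong) auto
      also have "\<dots> = Q $$ (i,k)" using k by (simp add: sum.delta)
      finally show ?thesis .
    qed
    finally show ?thesis .
  qed
  have left: "(Q * Wc x) $$ (i,j) = (\<Sum>k<N. complex_of_real (w k x) * (U x i k * complex_of_real (Tx x j k)))"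
    if i: "i < N" and j: "j < N" for x i j
  proof -
    have "(Q * Wc x) $$ (i,j) = (\<Sum>l<N. Q $$ (i,l) * Wc x $$ (l,j))"
      using mult_index_sum[OF QC WcC i j] .
    also have "\<dots> = (\<Sum>l<N. Q $$ (i,l) * complex_of_real (\<Sum>k<N. Tx x l k * w k x * Tx x j k))"
      using weight_carrier[of N a w x] j unfolding Wc_def Tx_def
      by (intro sum.cong) (simp_all add: weight_index)
    also have "\<dots> = (\<Sum>l<N. \<Sum>k<N. Q $$ (i,l) * complex_of_real (Tx x l k * w k x * Tx x j k))"
      by (simp add: sum_distrib_left)
    also have "\<dots> = (\<Sum>k<N. \<Sum>l<N. Q $$ (i,l) * complex_of_real (Tx x l k * w k x * Tx x j k))"
      by (rule sum.swap)
    also have "\<dots> = (\<Sum>k<N. complex_of_real (w k x) * (U x i k * complex_of_real (Tx x j k)))"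
      unfolding U_def by (simp add: sum_distrib_left sum_distrib_right mult_ac)
    finally show ?thesis .
  qed
  have right: "(Wc x * mat_adjoint Q) $$ (i,j) = (\<Sum>k<N. complex_of_real (w k x) * (complex_of_real (Tx x i k) * cnj (U x j k)))"
    if i: "i < N" and j: "j < N" for x i j
  proof -
    have "(Wc x * mat_adjoint Q) $$ (i,j) = (\<Sum>l<N. Wc x $$ (i,l) * mat_adjoint Q $$ (l,j))"
      using mult_index_sum[OF WcC QhC i j] .
    also have "\<dots> = (\<Sum>l<N. complex_of_real (\<Sum>k<N. Tx x i k * w k x * Tx x l k) * cnj (Q $$ (j,l)))"
      using weight_carrier[of N a w x] i j QD unfolding Wc_def Tx_def
      by (intro sum.cong) (simp_all add: weight_index)
    also have "\<dots> = (\<Sum>l<N. \<Sum>k<N. complex_of_real (Tx x i k * w k x * Tx x l k) * cnj (Q $$ (j,l)))"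
      by (simp add: sum_distrib_right)
    also have "\<dots> = (\<Sum>k<N. \<Sum>l<N. complex_of_real (Tx x i k * w k x * Tx x l k) * cnj (Q $$ (j,l)))"
      by (rule sum.swap)
    also have "\<dots> = (\<Sum>k<N. complex_of_real (w k x) * (complex_of_real (Tx x i k) * cnj (U x j k)))"
      unfolding U_def by (simp add: sum_distrib_left sum_distrib_right mult_ac)
    finally show ?thesis .
  qed
  define c0 where "c0 i j k = Q $$ (i,k) * dl j k - dl i k * cnj (Q $$ (j,k))" for i j k
  define c1 where "c1 i j k = Q $$ (i,k) * Ax j k + R i k * dl j k - dl i k * cnj (R j k) - Ax i k * cnj (Q $$ (j,k))" for i j k
  define c2 where "c2 i j k = R i k * Ax j k - Ax i k * cnj (R j k)" for i j k
  have cnjAx: "cnj (Ax l k) = Ax l k" for l k unfolding Ax_def by simp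
  have cnjdl: "cnj (dl l k) = dl l k" for l k unfolding dl_def by simp
  have bracket: "U x i k * complex_of_real (Tx x j k) - complex_of_real (Tx x i k) * cnj (U x j k)
      = c0 i j k + complex_of_real x * c1 i j k + (complex_of_real x)^2 * c2 i j k"
    if i: "i < N" and j: "j < N" and k: "k < N" for x i j k
    unfolding U_eq[OF k] Tx_eq[OF i k] Tx_eq[OF j k] c0_def c1_def c2_def
    by (simp add: algebra_simps power2_eq_square)
  have main: "(\<Sum>k<N. complex_of_real (w k x) * (c0 i j k + complex_of_real x * c1 i j k + (complex_of_real x)^2 * c2 i j k)) = 0"
    if x: "x \<in> S" and i: "i < N" and j: "j < N" for x i j
  proof -
    have "(Q * Wc x) $$ (i,j) = (Wc x * mat_adjoint Q) $$ (i,j)" using eq x unfolding Wc_def by simp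
    then have "(\<Sum>k<N. complex_of_real (w k x) * (U x i k * complex_of_real (Tx x j k)))
       - (\<Sum>k<N. complex_of_real (w k x) * (complex_of_real (Tx x i k) * cnj (U x j k))) = 0"
      using left[OF i j] right[OF i j] by simp
    then have "(\<Sum>k<N. complex_of_real (w k x) * (U x i k * complex_of_real (Tx x j k) - complex_of_real (Tx x i k) * cnj (U x j k))) = 0"
      by (simp add: sum_subtractf right_diff_distrib)
    then show ?thesis using bracket[OF i j] by simp
  qed
  have czero: "c0 i j k = 0 \<and> c1 i j k = 0" if i: "i < N" and j: "j < N" and k: "k < N" for i j k
  proof -
    have "\<forall>k<N. [:Re (c0 i j k), Re (c1 i j k), Re (c2 i j k):] = 0"
    proof (rule indep, intro ballI)
      fix x assume x: "x \<in> S"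
      have "Re (\<Sum>k<N. complex_of_real (w k x) * (c0 i j k + complex_of_real x * c1 i j k + (complex_of_real x)^2 * c2 i j k)) = 0"
        using main[OF x i j] by simp
      then show "(\<Sum>k<N. w k x * poly [:Re (c0 i j k), Re (c1 i j k), Re (c2 i j k):] x) = 0"
        by (simp add: Re_sum power2_eq_square algebra_simps)
    qed
    moreover have "\<forall>k<N. [:Im (c0 i j k), Im (c1 i j k), Im (c2 i j k):] = 0"
    proof (rule indep, intro ballI)
      fix x assume x: "x \<in> S"
      have "Im (\<Sum>k<N. complex_of_real (w k x) * (c0 i j k + complex_of_real x * c1 i j k + (complex_of_real x)^2 * c2 i j k)) = 0"
        using main[OF x i j] by simp
      then show "(\<Sum>k<N. w k x * poly [:Im (c0 i j k), Im (c1 i j k), Im (c2 i j k):] x) = 0"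
        by (simp add: Im_sum power2_eq_square algebra_simps)
    qed
    ultimately show ?thesis using k by (simp add: complex_eq_iff)
  qed
  have Qoff: "Q $$ (i,k) = 0" if i: "i < N" and k: "k < N" and ik: "i \<noteq> k" for i k
    using czero[OF i k k] ik unfolding c0_def dl_def by simp
  have Qreal: "cnj (Q $$ (k,k)) = Q $$ (k,k)" if k: "k < N" for k
    using czero[OF k k k] unfolding c0_def dl_def by simp
  have R_eq: "R i k = Q $$ (i,i) * Ax i k" if i: "i < N" and k: "k < N" for i k
  proof -
    have "R i k = (\<Sum>l<N. if l = i then Q $$ (i,i) * Ax i k else 0)"
      unfolding R_def using Qoff[OF i] by (intro sum.cong) auto
    also have "\<dots> = Q $$ (i,i) * Ax i k" using i by (simp add: sum.delta)
    finally show ?thesis .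
  qed
  have step: "Ax i j * (Q $$ (i,i) - Q $$ (j,j)) = 0" if i: "i < N" and j: "j < N" and ij: "i \<noteq> j" for i j
  proof -
    have "Ax j j = 0" unfolding Ax_def using A_diag[OF j] by simp
    then show ?thesis
      using czero[OF i j j] ij Qoff[OF i j ij] Qreal[OF j] R_eq[OF i j] unfolding c1_def dl_def
      by (simp add: algebra_simps)
  qed
  have adjq: "Q $$ (Suc i, Suc i) = Q $$ (i,i)" if si: "Suc i < N" for i
  proof (cases "even i")
    case True
    have "Ax i (Suc i) = complex_of_real (a (Suc i))"
      unfolding Ax_def using si True by (simp add: A_index)
    moreover have "a (Suc i) \<noteq> 0" using anz si by auto
    ultimately show ?thesis using step[of i "Suc i"] si by simp
  next
    case False
    have "Ax (Suc i) i = complex_of_real (a (Suc i))"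
      unfolding Ax_def using si False by (simp add: A_index)
    moreover have "a (Suc i) \<noteq> 0" using anz si by auto
    ultimately show ?thesis using step[of "Suc i" i] si by simp
  qed
  have alld: "k < N \<longrightarrow> Q $$ (k,k) = Q $$ (0,0)" for k
    by (induction k) (use adjq in auto)
  have "Q = Q $$ (0,0) \<cdot>\<^sub>m 1\<^sub>m N"
  proof (rule eq_matI)
    fix i j assume i: "i < dim_row (Q $$ (0,0) \<cdot>\<^sub>m 1\<^sub>m N)" and j: "j < dim_col (Q $$ (0,0) \<cdot>\<^sub>m 1\<^sub>m N)"
    then have i': "i < N" and j': "j < N" by simp_all
    show "Q $$ (i,j) = (Q $$ (0,0) \<cdot>\<^sub>m 1\<^sub>m N) $$ (i,j)"
      using i' j' Qoff[OF i' j'] alld[of i] by (cases "i = j") simp_all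
  qed (use QD in simp_all)
  then show ?thesis by blast
qed

lemma dom_contra:
  fixes E h :: "nat \<Rightarrow> real \<Rightarrow> real" and L :: "nat \<Rightarrow> real"
  assumes F: "F \<noteq> bot" and fin: "finite K" and k0: "k0 \<in> K"
    and ev: "eventually (\<lambda>x. (\<Sum>k\<in>K. E k x * h k x) = 0) F"
    and lim: "\<And>k. k \<in> K \<Longrightarrow> (h k \<longlongrightarrow> L k) F" and L0: "L k0 \<noteq> 0"
    and evE: "eventually (\<lambda>x. E k0 x \<noteq> 0) F"
    and rat: "\<And>k. k \<in> K - {k0} \<Longrightarrow> ((\<lambda>x. E k x / E k0 x) \<longlongrightarrow> 0) F"
  shows False
proof -
  have evh: "eventually (\<lambda>x. h k0 x \<noteq> 0) F"
    using tendsto_imp_eventually_ne[OF lim[OF k0] L0] .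
  define g where "g x = (\<Sum>k\<in>K-{k0}. (E k x / E k0 x) * (h k x / h k0 x))" for x
  have "(g \<longlongrightarrow> (\<Sum>k\<in>K-{k0}. 0 * (L k / L k0))) F"
    unfolding g_def
  proof (intro tendsto_sum tendsto_mult tendsto_divide)
    fix k assume k: "k \<in> K - {k0}"
    show "((\<lambda>x. E k x / E k0 x) \<longlongrightarrow> 0) F" using rat[OF k] .
    show "(h k \<longlongrightarrow> L k) F" using lim k by blast
    show "(h k0 \<longlongrightarrow> L k0) F" using lim k0 by blast
    show "L k0 \<noteq> 0" using L0 .
  qed
  then have g0: "(g \<longlongrightarrow> 0) F" by simp
  have "eventually (\<lambda>x. 1 + g x = 0) F"
    using ev evE evh
  proof eventually_elim
    case (elim x)
    have "(\<Sum>k\<in>K. E k x * h k x) = E k0 x * h k0 x + (\<Sum>k\<in>K-{k0}. E k x * h k x)"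
      using sum.remove[OF fin k0] .
    moreover have "(\<Sum>k\<in>K-{k0}. E k x * h k x) = E k0 x * h k0 x * g x"
      unfolding g_def sum_distrib_left using elim by (intro sum.cong) (auto simp: field_simps)
    ultimately have "E k0 x * h k0 x * (1 + g x) = 0" using elim by (simp add: algebra_simps)
    then show "1 + g x = 0" using elim by simp
  qed
  then have "((\<lambda>x. 1 + g x) \<longlongrightarrow> 0) F" by (rule tendsto_eventually)
  moreover have "((\<lambda>x. 1 + g x) \<longlongrightarrow> 1) F" using tendsto_add[OF tendsto_const g0] by simp
  ultimately have "(0::real) = 1" using tendsto_unique[OF F] by blast
  then show False by simp
qed

lemma poly_order0_decomp:
  assumes "p \<noteq> 0"
  shows "\<exists>q. p = [:- c, 1:] ^ order c p * q \<and> poly q c \<noteq> 0"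
  using order_decomp[OF assms, of c] by (metis poly_eq_0_iff_dvd)

lemma exists_min_key:
  fixes key :: "nat \<Rightarrow> real"
  assumes "finite K" "K \<noteq> {}"
  shows "\<exists>k0\<in>K. \<forall>k\<in>K. key k0 \<le> key k"
proof -
  have "Min (key ` K) \<in> key ` K" using assms by simp
  then obtain k0 where "k0 \<in> K" "key k0 = Min (key ` K)" by auto
  then show ?thesis using assms by (metis Min_le finite_imageI image_eqI)
qed

lemma exists_max_key:
  fixes key :: "nat \<Rightarrow> real"
  assumes "finite K" "K \<noteq> {}"
  shows "\<exists>k0\<in>K. \<forall>k\<in>K. key k \<le> key k0"
proof -
  have "Max (key ` K) \<in> key ` K" using assms by simp
  then obtain k0 where "k0 \<in> K" "key k0 = Max (key ` K)" by auto
  then show ?thesis using assms by (metis Max_ge finite_imageI image_eqI)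
qed

lemma indep_L:
  fixes \<alpha> :: "nat \<Rightarrow> real" and p :: "nat \<Rightarrow> real poly"
  assumes dist: "\<forall>i<N. \<forall>j<N. i \<noteq> j \<longrightarrow> \<alpha> i - \<alpha> j \<notin> \<int>"
    and z: "\<forall>x\<in>{0<..}. (\<Sum>k<N. laguerre_w (\<alpha> k) x * poly (p k) x) = 0"
  shows "\<forall>k<N. p k = 0"
proof (rule ccontr)
  assume nz: "\<not> (\<forall>k<N. p k = 0)"
  define K where "K = {k. k < N \<and> p k \<noteq> 0}"
  have finK: "finite K" unfolding K_def by simp
  have Kne: "K \<noteq> {}" using nz unfolding K_def by auto
  define m where "m k = order 0 (p k)" for k
  have "\<forall>k\<in>K. \<exists>q. p k = [:- 0, 1:] ^ m k * q \<and> poly q 0 \<noteq> 0"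
    unfolding m_def K_def using poly_order0_decomp by blast
  then obtain q where q: "\<And>k. k \<in> K \<Longrightarrow> p k = [:0, 1:] ^ m k * q k \<and> poly (q k) 0 \<noteq> 0"
    using bchoice[of K] by (metis minus_zero)
  define key where "key k = \<alpha> k + real (m k)" for k
  have inj: "k = k'" if "k \<in> K" "k' \<in> K" "key k = key k'" for k k'
  proof (rule ccontr)
    assume "k \<noteq> k'"
    moreover have "\<alpha> k - \<alpha> k' = of_int (int (m k') - int (m k))"
      using that(3) unfolding key_def by simp
    ultimately show False using dist that(1,2) unfolding K_def by (metis (mono_tags) Ints_of_int mem_Collect_eq)
  qed
  obtain k0 where k0: "k0 \<in> K" and k0min: "\<forall>k\<in>K. key k0 \<le> key k"
    using exists_min_key[OF finK Kne] by blast
  define E where "E k x = x powr key k" for k x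
  define h where "h k x = exp (- x) * poly (q k) x" for k x
  define L where "L k = poly (q k) 0" for k
  show False
  proof (rule dom_contra[of "at_right 0" K k0 E h L])
    show "at_right (0::real) \<noteq> bot" by simp
    show "finite K" by fact
    show "k0 \<in> K" by fact
    show "eventually (\<lambda>x. (\<Sum>k\<in>K. E k x * h k x) = 0) (at_right 0)"
      using eventually_at_right_less[of "0::real"]
    proof eventually_elim
      case (elim x)
      have "(\<Sum>k\<in>K. E k x * h k x) = (\<Sum>k\<in>K. laguerre_w (\<alpha> k) x * poly (p k) x)"
      proof (rule sum.cong)
        fix k assume k: "k \<in> K"
        have "laguerre_w (\<alpha> k) x * poly (p k) x = exp (- x) * x powr \<alpha> k * (x ^ m k * poly (q k) x)"
          unfolding laguerre_w_def using q[OF k] by (simp add: poly_power)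
        also have "\<dots> = x powr key k * (exp (- x) * poly (q k) x)"
          unfolding key_def using elim by (simp add: powr_add powr_realpow)
        finally show "E k x * h k x = laguerre_w (\<alpha> k) x * poly (p k) x"
          unfolding E_def h_def by simp
      qed simp
      also have "\<dots> = (\<Sum>k<N. laguerre_w (\<alpha> k) x * poly (p k) x)"
        by (rule sum.mono_neutral_left) (auto simp: K_def)
      also have "\<dots> = 0" using z elim by simp
      finally show ?case .
    qed
    show "(h k \<longlongrightarrow> L k) (at_right 0)" if "k \<in> K" for k
    proof -
      have "(poly (q k) \<longlongrightarrow> poly (q k) 0) (at_right 0)"
        using continuous_within_poly[of 0 "{0<..}" "q k"] unfolding continuous_within .
      then have "((\<lambda>x. exp (- x) * poly (q k) x) \<longlongrightarrow> exp (- 0) * poly (q k) 0) (at_right 0)"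
        by (intro tendsto_intros)
      then show ?thesis unfolding h_def L_def by simp
    qed
    show "L k0 \<noteq> 0" unfolding L_def using q[OF k0] by simp
    show "eventually (\<lambda>x. E k0 x \<noteq> 0) (at_right 0)"
      using eventually_at_right_less[of "0::real"] by eventually_elim (simp add: E_def)
    show "((\<lambda>x. E k x / E k0 x) \<longlongrightarrow> 0) (at_right 0)" if k: "k \<in> K - {k0}" for k
    proof -
      have gt: "key k0 < key k" using k k0min inj[of k k0] k0 by force
      have "((\<lambda>x. x powr (key k - key k0)) \<longlongrightarrow> 0) (at_right 0)"
      proof (rule tendsto_zero_powrI)
        show "((\<lambda>x::real. x) \<longlongrightarrow> 0) (at_right 0)" by (rule tendsto_ident_at)
        show "((\<lambda>x. key k - key k0) \<longlongrightarrow> key k - key k0) (at_right 0)" by simp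
        show "\<forall>\<^sub>F x in at_right 0. 0 \<le> (x::real)"
          using eventually_at_right_less[of "0::real"] by eventually_elim simp
        show "0 < key k - key k0" using gt by simp
      qed
      moreover have "eventually (\<lambda>x. x powr (key k - key k0) = E k x / E k0 x) (at_right 0)"
        using eventually_at_right_less[of "0::real"] by eventually_elim (simp add: E_def powr_diff)
      ultimately show ?thesis by (rule Lim_transform_eventually)
    qed
  qed
qed

lemma neg_pow_eq: "((x::real) - 1) ^ n = (-1) ^ n * (1 - x) ^ n"
proof -
  have "x - 1 = (-1) * (1 - x)" by simp
  then have "(x - 1) ^ n = ((-1) * (1 - x)) ^ n" by simp
  also have "\<dots> = (-1) ^ n * (1 - x) ^ n" by (rule power_mult_distrib)
  finally show ?thesis .
qed

lemma indep_J:
  fixes \<alpha> \<beta> :: "nat \<Rightarrow> real" and p :: "nat \<Rightarrow> real poly"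
  assumes dist: "\<forall>i<N. \<forall>j<N. i \<noteq> j \<longrightarrow> \<alpha> i - \<alpha> j \<notin> \<int>"
    and z: "\<forall>x\<in>{-1<..<1}. (\<Sum>k<N. jacobi_w (\<alpha> k) (\<beta> k) x * poly (p k) x) = 0"
  shows "\<forall>k<N. p k = 0"
proof (rule ccontr)
  assume nz: "\<not> (\<forall>k<N. p k = 0)"
  define K where "K = {k. k < N \<and> p k \<noteq> 0}"
  have finK: "finite K" unfolding K_def by simp
  have Kne: "K \<noteq> {}" using nz unfolding K_def by auto
  define m where "m k = order 1 (p k)" for k
  have "\<forall>k\<in>K. \<exists>q. p k = [:- 1, 1:] ^ m k * q \<and> poly q 1 \<noteq> 0"
    unfolding m_def K_def using poly_order0_decomp by blast
  then obtain q where q: "\<And>k. k \<in> K \<Longrightarrow> p k = [:- 1, 1:] ^ m k * q k \<and> poly (q k) 1 \<noteq> 0"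
    using bchoice[of K] by metis
  define key where "key k = \<alpha> k + real (m k)" for k
  have inj: "k = k'" if "k \<in> K" "k' \<in> K" "key k = key k'" for k k'
  proof (rule ccontr)
    assume "k \<noteq> k'"
    moreover have "\<alpha> k - \<alpha> k' = of_int (int (m k') - int (m k))"
      using that(3) unfolding key_def by simp
    ultimately show False using dist that(1,2) unfolding K_def by (metis (mono_tags) Ints_of_int mem_Collect_eq)
  qed
  obtain k0 where k0: "k0 \<in> K" and k0min: "\<forall>k\<in>K. key k0 \<le> key k"
    using exists_min_key[OF finK Kne] by blast
  define E where "E k x = (1 - x) powr key k" for k x
  define h where "h k x = (1 + x) powr \<beta> k * ((-1) ^ m k * poly (q k) x)" for k x
  define L where "L k = 2 powr \<beta> k * ((-1) ^ m k * poly (q k) 1)" for k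
  have evI: "\<forall>\<^sub>F x in at_left 1. x \<in> {-1<..<(1::real)}"
    by (rule eventually_at_left_real) simp
  show False
  proof (rule dom_contra[of "at_left 1" K k0 E h L])
    show "at_left (1::real) \<noteq> bot" by simp
    show "finite K" by fact
    show "k0 \<in> K" by fact
    show "eventually (\<lambda>x. (\<Sum>k\<in>K. E k x * h k x) = 0) (at_left 1)"
      using evI
    proof eventually_elim
      case (elim x)
      then have x1: "0 < 1 - x" and x2: "0 < 1 + x" by auto
      have "(\<Sum>k\<in>K. E k x * h k x) = (\<Sum>k\<in>K. jacobi_w (\<alpha> k) (\<beta> k) x * poly (p k) x)"
      proof (rule sum.cong)
        fix k assume k: "k \<in> K"
        have "jacobi_w (\<alpha> k) (\<beta> k) x * poly (p k) x
            = (1 - x) powr \<alpha> k * (1 + x) powr \<beta> k * ((x - 1) ^ m k * poly (q k) x)"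
          unfolding jacobi_w_def using q[OF k] by (simp add: poly_power)
        also have "\<dots> = (1 - x) powr \<alpha> k * (1 + x) powr \<beta> k * ((-1) ^ m k * (1 - x) powr real (m k) * poly (q k) x)"
          unfolding neg_pow_eq using powr_realpow[OF x1, of "m k"] by simp
        also have "\<dots> = (1 - x) powr key k * ((1 + x) powr \<beta> k * ((-1) ^ m k * poly (q k) x))"
          unfolding key_def by (simp add: powr_add)
        finally show "E k x * h k x = jacobi_w (\<alpha> k) (\<beta> k) x * poly (p k) x"
          unfolding E_def h_def by simp
      qed simp
      also have "\<dots> = (\<Sum>k<N. jacobi_w (\<alpha> k) (\<beta> k) x * poly (p k) x)"
        by (rule sum.mono_neutral_left) (auto simp: K_def)
      also have "\<dots> = 0" using z elim by simp
      finally show ?case .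
    qed
    show "(h k \<longlongrightarrow> L k) (at_left 1)" if "k \<in> K" for k
    proof -
      have "(poly (q k) \<longlongrightarrow> poly (q k) 1) (at_left 1)"
        using continuous_within_poly[of 1 "{..<1}" "q k"] unfolding continuous_within .
      then have "((\<lambda>x. (1 + x) powr \<beta> k * ((-1) ^ m k * poly (q k) x)) \<longlongrightarrow>
          (1 + 1) powr \<beta> k * ((-1) ^ m k * poly (q k) 1)) (at_left 1)"
        by (intro tendsto_intros) simp_all
      then show ?thesis unfolding h_def L_def by simp
    qed
    show "L k0 \<noteq> 0" unfolding L_def using q[OF k0] by simp
    show "eventually (\<lambda>x. E k0 x \<noteq> 0) (at_left 1)"
      using evI by eventually_elim (simp add: E_def)
    show "((\<lambda>x. E k x / E k0 x) \<longlongrightarrow> 0) (at_left 1)" if k: "k \<in> K - {k0}" for k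
    proof -
      have gt: "key k0 < key k" using k k0min inj[of k k0] k0 by force
      have "((\<lambda>x. (1 - x) powr (key k - key k0)) \<longlongrightarrow> 0) (at_left 1)"
      proof (rule tendsto_zero_powrI)
        have "((\<lambda>x::real. 1 - x) \<longlongrightarrow> 1 - 1) (at_left 1)"
          by (intro tendsto_intros)
        then show "((\<lambda>x::real. 1 - x) \<longlongrightarrow> 0) (at_left 1)" by simp
        show "((\<lambda>x. key k - key k0) \<longlongrightarrow> key k - key k0) (at_left 1)" by simp
        show "\<forall>\<^sub>F x in at_left 1. 0 \<le> 1 - (x::real)"
          using evI by eventually_elim simp
        show "0 < key k - key k0" using gt by simp
      qed
      moreover have "eventually (\<lambda>x. (1 - x) powr (key k - key k0) = E k x / E k0 x) (at_left 1)"
        using evI by eventually_elim (simp add: E_def powr_diff)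
      ultimately show ?thesis by (rule Lim_transform_eventually)
    qed
  qed
qed

lemma pow_exp_decay:
  fixes c :: real
  assumes c: "0 < c"
  shows "((\<lambda>x. x ^ n * exp (- (c * x))) \<longlongrightarrow> 0) at_top"
proof -
  have lim: "filterlim (\<lambda>x::real. c * x) at_top at_top"
    using filterlim_tendsto_pos_mult_at_top[OF tendsto_const c filterlim_ident] .
  have "((\<lambda>x. (c * x) ^ n / exp (c * x)) \<longlongrightarrow> 0) at_top"
    using filterlim_compose[OF tendsto_power_div_exp_0 lim] .
  then have "((\<lambda>x. (c * x) ^ n / exp (c * x) / c ^ n) \<longlongrightarrow> 0) at_top"
    by (rule tendsto_divide_zero)
  moreover have "(c * x) ^ n / exp (c * x) / c ^ n = x ^ n * exp (- (c * x))" for x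
    using c by (simp add: power_mult_distrib exp_minus field_simps)
  ultimately show ?thesis by simp
qed

lemma indep_H:
  fixes b :: "nat \<Rightarrow> real" and p :: "nat \<Rightarrow> real poly"
  assumes dist: "\<forall>i<N. \<forall>j<N. i \<noteq> j \<longrightarrow> b i \<noteq> b j"
    and z: "\<forall>x\<in>UNIV. (\<Sum>k<N. hermite_w (b k) x * poly (p k) x) = 0"
  shows "\<forall>k<N. p k = 0"
proof (rule ccontr)
  assume nz: "\<not> (\<forall>k<N. p k = 0)"
  define K where "K = {k. k < N \<and> p k \<noteq> 0}"
  have finK: "finite K" unfolding K_def by simp
  have Kne: "K \<noteq> {}" using nz unfolding K_def by auto
  obtain k0 where k0: "k0 \<in> K" and k0max: "\<forall>k\<in>K. b k \<le> b k0"
    using exists_max_key[OF finK Kne] by blast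
  define d where "d k = degree (p k)" for k
  define E where "E k x = hermite_w (b k) x * x ^ d k" for k x
  define h where "h k x = poly (p k) x / x ^ d k" for k x
  define L where "L k = lead_coeff (p k)" for k
  have evI: "\<forall>\<^sub>F x in at_top. (1::real) \<le> x" by (rule eventually_ge_at_top)
  show False
  proof (rule dom_contra[of at_top K k0 E h L])
    show "at_top \<noteq> (bot :: real filter)" by simp
    show "finite K" by fact
    show "k0 \<in> K" by fact
    show "eventually (\<lambda>x. (\<Sum>k\<in>K. E k x * h k x) = 0) at_top"
      using evI
    proof eventually_elim
      case (elim x)
      have "(\<Sum>k\<in>K. E k x * h k x) = (\<Sum>k\<in>K. hermite_w (b k) x * poly (p k) x)"
        using elim by (intro sum.cong) (simp_all add: E_def h_def)
      also have "\<dots> = (\<Sum>k<N. hermite_w (b k) x * poly (p k) x)"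
        by (rule sum.mono_neutral_left) (auto simp: K_def)
      also have "\<dots> = 0" using z by simp
      finally show ?case .
    qed
    show "(h k \<longlongrightarrow> L k) at_top" if "k \<in> K" for k
      unfolding h_def L_def d_def
      by (rule tendsto_mono[OF at_top_le_at_infinity poly_divide_tendsto_aux])
    show "L k0 \<noteq> 0" unfolding L_def using k0 by (simp add: K_def)
    show "eventually (\<lambda>x. E k0 x \<noteq> 0) at_top"
      using evI by eventually_elim (simp add: E_def hermite_w_def)
    show "((\<lambda>x. E k x / E k0 x) \<longlongrightarrow> 0) at_top" if k: "k \<in> K - {k0}" for k
    proof -
      have "b k \<noteq> b k0" using k k0 dist unfolding K_def by auto
      then have gt: "b k < b k0" using k k0max by force
      define c where "c = 2 * (b k0 - b k)"
      have c: "0 < c" unfolding c_def using gt by simp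
      show ?thesis
      proof (rule tendsto_sandwich[of "\<lambda>x. 0" _ _ "\<lambda>x. x ^ d k * exp (- (c * x))"])
        show "((\<lambda>x. x ^ d k * exp (- (c * x))) \<longlongrightarrow> 0) at_top" using pow_exp_decay[OF c] .
        show "((\<lambda>x. 0) \<longlongrightarrow> (0::real)) at_top" by simp
        show "\<forall>\<^sub>F x in at_top. 0 \<le> E k x / E k0 x"
          using evI by eventually_elim (simp add: E_def hermite_w_def)
        show "\<forall>\<^sub>F x in at_top. E k x / E k0 x \<le> x ^ d k * exp (- (c * x))"
          using evI
        proof eventually_elim
          case (elim x)
          have hw: "hermite_w (b k) x / hermite_w (b k0) x = exp (- (c * x))"
            unfolding hermite_w_def c_def exp_diff[symmetric] by (simp add: algebra_simps)
          have "E k x / E k0 x = exp (- (c * x)) * x ^ d k / x ^ d k0"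
            using elim hw[symmetric] by (simp add: E_def hermite_w_def field_simps)
          also have "\<dots> \<le> x ^ d k * exp (- (c * x))"
          proof -
            have "1 \<le> x ^ d k0" using elim by (simp add: one_le_power)
            moreover have "0 \<le> exp (- (c * x)) * x ^ d k" using elim by simp
            ultimately have "1 * (exp (- (c * x)) * x ^ d k) \<le> x ^ d k0 * (exp (- (c * x)) * x ^ d k)"
              by (rule mult_right_mono)
            moreover have "0 < x ^ d k0" using elim by simp
            ultimately show ?thesis by (simp add: divide_le_eq mult_ac)
          qed
          finally show ?case .
        qed
      qed
    qed
  qed
qed

lemma irred_from_indep:
  assumes anz: "\<forall>k\<in>{1..N-1}. a k \<noteq> 0"
    and indep: "\<And>p. \<forall>x\<in>S. (\<Sum>k<N. w k x * poly (p k) x) = 0 \<Longrightarrow> \<forall>k<N. p k = 0"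
  shows "irreducible_weight N S (weight_mat N a w)"
  unfolding irreducible_weight_def
proof
  assume red: "reducible_weight N S (weight_mat N a w)"
  obtain Q where QC: "Q \<in> carrier_mat N N"
    and eq: "\<forall>x\<in>S. Q * map_mat complex_of_real (weight_mat N a w x)
            = map_mat complex_of_real (weight_mat N a w x) * mat_adjoint Q"
    and ns: "\<forall>d. Q \<noteq> d \<cdot>\<^sub>m 1\<^sub>m N"
    using reduce[OF red weight_carrier] by blast
  show False using core[OF QC anz indep eq] ns by blast
qed

theorem proposition3p7:
  fixes N :: nat and a :: "nat \<Rightarrow> real"
    and b :: "nat \<Rightarrow> real" and \<alpha>L :: "nat \<Rightarrow> real"
    and \<alpha> \<beta> :: "nat \<Rightarrow> real"
  assumes "N \<ge> 2"
    and "\<forall>k \<in> {1..N-1}. a k \<noteq> 0"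
  shows
   "((\<forall>i<N. \<forall>j<N. i \<noteq> j \<longrightarrow> b i \<noteq> b j) \<longrightarrow>
       irreducible_weight N UNIV (weight_mat N a (\<lambda>i. hermite_w (b i)))) \<and>
    ((\<forall>i<N. \<alpha>L i > -1) \<and> (\<forall>i<N. \<forall>j<N. i \<noteq> j \<longrightarrow> \<alpha>L i - \<alpha>L j \<notin> \<int>) \<longrightarrow>
       irreducible_weight N {0<..} (weight_mat N a (\<lambda>i. laguerre_w (\<alpha>L i)))) \<and>
    ((\<forall>i<N. \<alpha> i > -1 \<and> \<beta> i > -1) \<and>
     (\<forall>i<N. \<forall>j<N. i \<noteq> j \<longrightarrow> \<alpha> i - \<alpha> j \<notin> \<int> \<or> \<beta> i - \<beta> j \<notin> \<int>) \<and>
     (\<forall>j<N. \<alpha> 0 + \<beta> 0 = \<alpha> j + \<beta> j + 1 + (-1) ^ (j + 1)) \<longrightarrow>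
       irreducible_weight N {-1<..<1} (weight_mat N a (\<lambda>i. jacobi_w (\<alpha> i) (\<beta> i))))"
proof (intro conjI impI)
  assume d: "\<forall>i<N. \<forall>j<N. i \<noteq> j \<longrightarrow> b i \<noteq> b j"
  show "irreducible_weight N UNIV (weight_mat N a (\<lambda>i. hermite_w (b i)))"
    by (rule irred_from_indep[OF assms(2)]) (rule indep_H[OF d], simp)
next
  assume "(\<forall>i<N. \<alpha>L i > -1) \<and> (\<forall>i<N. \<forall>j<N. i \<noteq> j \<longrightarrow> \<alpha>L i - \<alpha>L j \<notin> \<int>)"
  then have d: "\<forall>i<N. \<forall>j<N. i \<noteq> j \<longrightarrow> \<alpha>L i - \<alpha>L j \<notin> \<int>" by blast
  show "irreducible_weight N {0<..} (weight_mat N a (\<lambda>i. laguerre_w (\<alpha>L i)))"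
    by (rule irred_from_indep[OF assms(2)]) (rule indep_L[OF d], simp)
next
  assume h: "(\<forall>i<N. \<alpha> i > -1 \<and> \<beta> i > -1) \<and>
     (\<forall>i<N. \<forall>j<N. i \<noteq> j \<longrightarrow> \<alpha> i - \<alpha> j \<notin> \<int> \<or> \<beta> i - \<beta> j \<notin> \<int>) \<and>
     (\<forall>j<N. \<alpha> 0 + \<beta> 0 = \<alpha> j + \<beta> j + 1 + (-1) ^ (j + 1))"
  have d: "\<forall>i<N. \<forall>j<N. i \<noteq> j \<longrightarrow> \<alpha> i - \<alpha> j \<notin> \<int>"
  proof (intro allI impI)
    fix i j assume i: "i < N" and j: "j < N" and ij: "i \<noteq> j"
    show "\<alpha> i - \<alpha> j \<notin> \<int>"
    proof
      assume ai: "\<alpha> i - \<alpha> j \<in> \<int>"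
      have ei: "\<alpha> 0 + \<beta> 0 = \<alpha> i + \<beta> i + 1 + (-1) ^ (i + 1)" using h i by blast
      have ej: "\<alpha> 0 + \<beta> 0 = \<alpha> j + \<beta> j + 1 + (-1) ^ (j + 1)" using h j by blast
      have "\<beta> i - \<beta> j = ((-1) ^ (j + 1) - (-1) ^ (i + 1)) - (\<alpha> i - \<alpha> j)"
        using ei ej by linarith
      also have "\<dots> \<in> \<int>"
      proof (rule Ints_diff)
        show "(-1::real) ^ (j + 1) - (-1) ^ (i + 1) \<in> \<int>"
          by (intro Ints_diff Ints_power Ints_minus Ints_1)
      qed (rule ai)
      finally have "\<beta> i - \<beta> j \<in> \<int>" .
      then show False using ai h i j ij by blast
    qed
  qed
  show "irreducible_weight N {-1<..<1} (weight_mat N a (\<lambda>i. jacobi_w (\<alpha> i) (\<beta> i)))"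
    by (rule irred_from_indep[OF assms(2)]) (rule indep_J[OF d], simp)
qed

end
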